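(* Let $G$ be a graph, $B\subseteq V(G)$ and $\ell\ge 1$. Then $B$ is a mixed $\ell$-leaky forcing set of $G$ if and only if $B$ is an $(\ell-1)$-leaky forcing set of $G$ such that for every set $L\subseteq V(G)$ of $\ell-1$ vertex leaks and every $v\in V(G)\setminus B$ there exist forces $x\to v$ and $y\to v$ in $\mathcal{F}_L(B)$ with $x\ne y$.
   Context: All graphs are finite, simple and undirected. Zero forcing: a blue vertex $u$ with exactly one white neighbor $w$ may force $w$ (color it blue), written $u\to w$. From an initial blue set $B$, a forcing sequence is a chronologically ordered list of forces each valid when performed. A vertex leak is a vertex not allowed to perform any force; $B$ is an $\ell$-leaky forcing set if for every set of at most $\ell$ vertex leaks, exhaustively applying the forcing rule from $B$ colors all of $V(G)$ blue. For $L\subseteq V(G)$, $\mathcal{F}_L(B)$ is the set of all forces $x\to v$ occurring in some forcing sequence from $B$ in which no vertex of $L$ performs a force. An edge leak is an edge $xy$ across which no force may be performed (neither $x\to y$ nor $y\to x$). A specified leak is an ordered pair $x\to y$ meaning $x$ may not force $y$. A leak is any of these three kinds. $B$ is a mixed $\ell$-leaky forcing set if for every set of at most $\ell$ leaks (of any mix of kinds), exhaustively applying the forcing rule from $B$ subject to the leaks colors all of $V(G)$ blue. *)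

theory Defs
  imports Main
begin

definition simple_graph :: "'a set \<Rightarrow> ('a \<Rightarrow> 'a \<Rightarrow> bool) \<Rightarrow> bool" where
  "simple_graph V E \<longleftrightarrow> finite V \<and>
     (\<forall>x y. E x y \<longrightarrow> x \<in> V \<and> y \<in> V \<and> x \<noteq> y \<and> E y x)"

text \<open>Final blue set obtained by exhaustively applying the forcing rule from B,
  where blk x y means that x is not allowed to force y.\<close>
inductive_set closure :: "('a \<Rightarrow> 'a \<Rightarrow> bool) \<Rightarrow> ('a \<Rightarrow> 'a \<Rightarrow> bool) \<Rightarrow> 'a set \<Rightarrow> 'a set"
  for E blk B where
  base: "b \<in> B \<Longrightarrow> b \<in> closure E blk B"
| force: "\<lbrakk>u \<in> closure E blk B; E u w; \<not> blk u w;
          \<And>z. E u z \<Longrightarrow> z \<noteq> w \<Longrightarrow> z \<in> closure E blk B\<rbrakk>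
          \<Longrightarrow> w \<in> closure E blk B"

definition leaky_forcing_set :: "'a set \<Rightarrow> ('a \<Rightarrow> 'a \<Rightarrow> bool) \<Rightarrow> 'a set \<Rightarrow> nat \<Rightarrow> bool" where
  "leaky_forcing_set V E B l \<longleftrightarrow>
     (\<forall>L. L \<subseteq> V \<and> card L \<le> l \<longrightarrow> closure E (\<lambda>x y. x \<in> L) B = V)"

text \<open>Leaks of the three kinds: vertex leak, edge leak (an unordered edge),
  specified leak x -> y.\<close>
datatype 'a leak = VLeak 'a | ELeak "'a set" | SLeak 'a 'a

definition valid_leak :: "'a set \<Rightarrow> ('a \<Rightarrow> 'a \<Rightarrow> bool) \<Rightarrow> 'a leak \<Rightarrow> bool" where
  "valid_leak V E lk = (case lk of
      VLeak x \<Rightarrow> x \<in> V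
    | ELeak e \<Rightarrow> (\<exists>x y. e = {x, y} \<and> E x y)
    | SLeak x y \<Rightarrow> E x y)"

definition leak_blocks :: "'a leak set \<Rightarrow> 'a \<Rightarrow> 'a \<Rightarrow> bool" where
  "leak_blocks Ls x y \<longleftrightarrow> VLeak x \<in> Ls \<or> ELeak {x, y} \<in> Ls \<or> SLeak x y \<in> Ls"

definition mixed_leaky_forcing_set :: "'a set \<Rightarrow> ('a \<Rightarrow> 'a \<Rightarrow> bool) \<Rightarrow> 'a set \<Rightarrow> nat \<Rightarrow> bool" where
  "mixed_leaky_forcing_set V E B l \<longleftrightarrow>
     (\<forall>Ls. finite Ls \<and> card Ls \<le> l \<and> (\<forall>lk \<in> Ls. valid_leak V E lk)
        \<longrightarrow> closure E (leak_blocks Ls) B = V)"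

definition forcing_seq :: "('a \<Rightarrow> 'a \<Rightarrow> bool) \<Rightarrow> 'a set \<Rightarrow> 'a set \<Rightarrow> ('a \<times> 'a) list \<Rightarrow> bool" where
  "forcing_seq E L B fs \<longleftrightarrow>
     (\<forall>i < length fs.
        (let x = fst (fs ! i); v = snd (fs ! i); S = B \<union> snd ` set (take i fs) in
          x \<in> S \<and> v \<notin> S \<and> E x v \<and> x \<notin> L \<and> (\<forall>z. E x z \<and> z \<noteq> v \<longrightarrow> z \<in> S)))"

definition forces_set :: "('a \<Rightarrow> 'a \<Rightarrow> bool) \<Rightarrow> 'a set \<Rightarrow> 'a set \<Rightarrow> ('a \<times> 'a) set" where
  "forces_set E L B = {f. \<exists>fs. forcing_seq E L B fs \<and> f \<in> set fs}"

end

theory Submission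
  imports Defs
begin

definition fseq :: "('a \<Rightarrow> 'a \<Rightarrow> bool) \<Rightarrow> ('a \<Rightarrow> 'a \<Rightarrow> bool) \<Rightarrow> 'a set \<Rightarrow> ('a \<times> 'a) list \<Rightarrow> bool" where
  "fseq E blk B fs \<longleftrightarrow>
     (\<forall>i < length fs.
        (let x = fst (fs ! i); v = snd (fs ! i); S = B \<union> snd ` set (take i fs) in
          x \<in> S \<and> v \<notin> S \<and> E x v \<and> \<not> blk x v \<and> (\<forall>z. E x z \<and> z \<noteq> v \<longrightarrow> z \<in> S)))"

lemma forcing_seq_eq: "forcing_seq E L B fs = fseq E (\<lambda>x y. x \<in> L) B fs"
  by (simp add: forcing_seq_def fseq_def)

lemma fseq_mono: "fseq E blk B fs \<Longrightarrow> (\<And>x y. blk' x y \<Longrightarrow> blk x y) \<Longrightarrow> fseq E blk' B fs"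
  unfolding fseq_def Let_def by blast

lemma fseq_nil: "fseq E blk B []"
  by (simp add: fseq_def)

lemma fseq_snoc:
  assumes "fseq E blk B fs" "S = B \<union> snd ` set fs" "u \<in> S" "w \<notin> S" "E u w" "\<not> blk u w"
    "\<forall>z. E u z \<and> z \<noteq> w \<longrightarrow> z \<in> S"
  shows "fseq E blk B (fs @ [(u,w)])"
  unfolding fseq_def
proof (intro allI impI)
  fix i assume i: "i < length (fs @ [(u, w)])"
  show "let x = fst ((fs @ [(u, w)]) ! i); v = snd ((fs @ [(u, w)]) ! i);
          S = B \<union> snd ` set (take i (fs @ [(u, w)]))
      in x \<in> S \<and> v \<notin> S \<and> E x v \<and> \<not> blk x v \<and> (\<forall>z. E x z \<and> z \<noteq> v \<longrightarrow> z \<in> S)"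
  proof (cases "i < length fs")
    case True
    then show ?thesis using assms(1) unfolding fseq_def by (simp add: nth_append)
  next
    case False
    then have "i = length fs" using i by simp
    then show ?thesis using assms by simp
  qed
qed

lemma fseq_distinct: assumes "fseq E blk B fs" shows "distinct (map snd fs)"
proof -
  have "\<forall>i<length fs. \<forall>j<length fs. i < j \<longrightarrow> snd (fs ! i) \<noteq> snd (fs ! j)"
  proof (intro allI impI)
    fix i j assume ij: "i < length fs" "j < length fs" "i < j"
    have "snd (fs ! j) \<notin> snd ` set (take j fs)" using assms ij unfolding fseq_def Let_def by auto
    moreover have "fs ! i \<in> set (take j fs)" using ij by (auto simp: in_set_conv_nth intro!: exI[of _ i])
    ultimately show "snd (fs ! i) \<noteq> snd (fs ! j)" by (metis image_eqI)
  qed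
  show ?thesis unfolding distinct_conv_nth
  proof (intro allI impI)
    fix i j assume ij: "i < length (map snd fs)" "j < length (map snd fs)" "i \<noteq> j"
    then have "i < j \<or> j < i" by arith
    then have "snd (fs ! i) \<noteq> snd (fs ! j)"
    proof
      assume "i < j" then show ?thesis
        using \<open>\<forall>i<length fs. \<forall>j<length fs. i < j \<longrightarrow> snd (fs ! i) \<noteq> snd (fs ! j)\<close> ij by simp
    next
      assume "j < i" then have "snd (fs ! j) \<noteq> snd (fs ! i)"
        using \<open>\<forall>i<length fs. \<forall>j<length fs. i < j \<longrightarrow> snd (fs ! i) \<noteq> snd (fs ! j)\<close> ij by simp
      then show ?thesis by simp
    qed
    then show "map snd fs ! i \<noteq> map snd fs ! j" using ij by simp
  qed
qed

lemma fseq_sub: assumes "simple_graph V E" "fseq E blk B fs" shows "snd ` set fs \<subseteq> V"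
proof
  fix v assume "v \<in> snd ` set fs"
  then obtain i where i: "i < length fs" "v = snd (fs ! i)" by (metis imageE in_set_conv_nth)
  then have "E (fst (fs ! i)) v" using assms(2) unfolding fseq_def Let_def by auto
  then show "v \<in> V" using assms(1) unfolding simple_graph_def by blast
qed

lemma fseq_len: assumes "simple_graph V E" "fseq E blk B fs" shows "length fs \<le> card V"
proof -
  have "length fs = card (set (map snd fs))" using fseq_distinct[OF assms(2)] distinct_card by fastforce
  also have "\<dots> \<le> card V" using fseq_sub[OF assms] assms(1) unfolding simple_graph_def
    by (simp add: card_mono)
  finally show ?thesis .
qed

lemma closure_seq:
  assumes "simple_graph V E"
  shows "\<exists>fs. fseq E blk B fs \<and> closure E blk B \<subseteq> B \<union> snd ` set fs"
proof -
  have "\<exists>x. fseq E blk B x \<and> (\<forall>y. fseq E blk B y \<longrightarrow> length y \<le> length x)"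
  proof -
    have b: "\<forall>y. fseq E blk B y \<longrightarrow> length y < card V + 1"
      using fseq_len[OF assms] by (simp add: less_Suc_eq_le)
    show ?thesis
      using Lattices_Big.ex_has_greatest_nat[of "fseq E blk B" "[]" length "card V + 1", OF fseq_nil b] .
  qed
  then obtain fs where fs: "fseq E blk B fs" and mx: "\<forall>y. fseq E blk B y \<longrightarrow> length y \<le> length fs"
    by blast
  let ?S = "B \<union> snd ` set fs"
  have "w \<in> ?S" if "w \<in> closure E blk B" for w
    using that
  proof (induction rule: closure.induct)
    case (base b) then show ?case by simp
  next
    case (force u w)
    show ?case
    proof (rule ccontr)
      assume "w \<notin> ?S"
      then have "fseq E blk B (fs @ [(u,w)])"
        using fseq_snoc[OF fs refl] force by blast
      then show False using mx by fastforce
    qed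
  qed
  then show ?thesis using fs by blast
qed

lemma closure_sub: assumes "simple_graph V E" "B \<subseteq> V" shows "closure E blk B \<subseteq> V"
proof
  fix w assume "w \<in> closure E blk B"
  then show "w \<in> V"
  proof (induction rule: closure.induct)
    case (base b) then show ?case using assms by auto
  next
    case (force u w) then show ?case using assms(1) unfolding simple_graph_def by blast
  qed
qed

lemma closure_force_exists:
  assumes "simple_graph V E" "v \<in> closure E blk B" "v \<notin> B"
  shows "\<exists>fs y. fseq E blk B fs \<and> (y, v) \<in> set fs \<and> \<not> blk y v \<and> E y v"
proof -
  obtain fs where fs: "fseq E blk B fs" "closure E blk B \<subseteq> B \<union> snd ` set fs"
    using closure_seq[OF assms(1)] by blast
  then obtain p where p: "p \<in> set fs" "snd p = v" using assms by auto
  then obtain i where i: "i < length fs" "fs ! i = p" by (metis in_set_conv_nth)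
  then have "\<not> blk (fst p) v \<and> E (fst p) v" using fs(1) p unfolding fseq_def Let_def by auto
  then show ?thesis using fs p by (metis prod.collapse)
qed

lemma forcing_seq_nth:
  assumes "forcing_seq E L B fs" "i < length fs" "fs ! i = (x, v)"
  shows "x \<in> B \<union> snd ` set (take i fs) \<and> v \<notin> B \<union> snd ` set (take i fs) \<and> E x v \<and> x \<notin> L \<and>
         (\<forall>z. E x z \<and> z \<noteq> v \<longrightarrow> z \<in> B \<union> snd ` set (take i fs))"
proof -
  have "let x = fst (fs ! i); v = snd (fs ! i); S = B \<union> snd ` set (take i fs) in
          x \<in> S \<and> v \<notin> S \<and> E x v \<and> x \<notin> L \<and> (\<forall>z. E x z \<and> z \<noteq> v \<longrightarrow> z \<in> S)"
    using assms(1)[unfolded forcing_seq_def, rule_format, OF assms(2)] .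
  then show ?thesis unfolding Let_def assms(3) by simp
qed

lemma main_vertex:
  assumes sg: "simple_graph V E" and BV: "B \<subseteq> V"
    and two: "\<forall>v\<in>V-B. \<exists>x y. (x, v) \<in> forces_set E L B \<and> (y, v) \<in> forces_set E L B \<and> x \<noteq> y"
  shows "closure E (\<lambda>x y. x \<in> insert a L) B = V"
proof (rule ccontr)
  let ?C = "closure E (\<lambda>x y. x \<in> insert a L) B"
  have CV: "?C \<subseteq> V" by (rule closure_sub[OF sg BV])
  have BC: "B \<subseteq> ?C" by (auto intro: closure.base)
  assume "?C \<noteq> V"
  then obtain v0 where v0: "v0 \<in> V" "v0 \<notin> ?C" using CV by blast
  have key: "fst (fs!i) = a \<and> (\<forall>z. E a z \<and> z \<noteq> snd(fs!i) \<longrightarrow> z \<in> ?C) \<and> E a (snd (fs!i))"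
    if fs: "forcing_seq E L B fs" and i: "i < length fs" "snd (fs!i) \<notin> ?C"
      and pre: "\<forall>j<i. snd (fs!j) \<in> ?C" for fs i
  proof -
    let ?S = "B \<union> snd ` set (take i fs)"
    have SC: "?S \<subseteq> ?C"
    proof
      fix z assume "z \<in> ?S"
      then show "z \<in> ?C"
      proof
        assume "z \<in> B" then show ?thesis using BC by blast
      next
        assume "z \<in> snd ` set (take i fs)"
        then obtain j where "j < length (take i fs)" "z = snd (take i fs ! j)"
          by (metis imageE in_set_conv_nth)
        then show ?thesis using pre by auto
      qed
    qed
    obtain x v where xv: "fs ! i = (x, v)" by fastforce
    have st: "x \<in> ?S" "E x v" "x \<notin> L" "\<forall>z. E x z \<and> z \<noteq> v \<longrightarrow> z \<in> ?S"
      using forcing_seq_nth[OF fs i(1) xv] by simp_all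
    have "x = a"
    proof (rule ccontr)
      assume "x \<noteq> a"
      have nb: "\<And>z. E x z \<Longrightarrow> z \<noteq> v \<Longrightarrow> z \<in> ?C" using st(4) SC by blast
      have "x \<in> ?C" using st(1) SC by blast
      moreover have "\<not> (x \<in> insert a L)" using \<open>x \<noteq> a\<close> st(3) by simp
      ultimately have "v \<in> ?C"
        using closure.force[of x E "\<lambda>x y. x \<in> insert a L" B v, OF _ st(2) _ nb] by blast
      then show False using i xv by simp
    qed
    then show ?thesis using st SC xv by auto
  qed
  have first: "\<exists>i\<le>k. snd (fs!i) \<notin> ?C \<and> (\<forall>j<i. snd (fs!j) \<in> ?C)"
    if "snd (fs!k) \<notin> ?C" for fs :: "('a \<times> 'a) list" and k
  proof -
    have "\<exists>n. n \<le> k \<and> snd (fs!n) \<notin> ?C" using that by blast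
    then obtain n where "n \<le> k \<and> snd (fs!n) \<notin> ?C" "\<forall>m<n. \<not> (m \<le> k \<and> snd (fs!m) \<notin> ?C)"
      using exists_least_iff[of "\<lambda>n. n \<le> k \<and> snd (fs!n) \<notin> ?C"] by blast
    then show ?thesis by (meson less_imp_le_nat order.strict_trans2)
  qed
  have v0B: "v0 \<in> V - B" using v0 BC by blast
  then obtain x0 where "(x0, v0) \<in> forces_set E L B" using two by blast
  then obtain fs0 where fs0: "forcing_seq E L B fs0" "(x0, v0) \<in> set fs0"
    unfolding forces_set_def by blast
  then obtain k0 where k0: "k0 < length fs0" "fs0 ! k0 = (x0, v0)" by (metis in_set_conv_nth)
  obtain i0 where i0: "i0 \<le> k0" "snd (fs0!i0) \<notin> ?C" "\<forall>j<i0. snd (fs0!j) \<in> ?C"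
    using first[of fs0 k0] k0 v0 by auto
  define b where "b = snd (fs0!i0)"
  have kb: "\<forall>z. E a z \<and> z \<noteq> b \<longrightarrow> z \<in> ?C" "E a b"
    using key[OF fs0(1) _ i0(2,3)] i0(1) k0(1) unfolding b_def by auto
  have bC0: "b \<notin> ?C" using i0(2) b_def by simp
  have "b \<in> V" using kb(2) sg unfolding simple_graph_def by blast
  then have "b \<in> V - B" using bC0 BC by blast
  then obtain x y where xy: "(x, b) \<in> forces_set E L B" "(y, b) \<in> forces_set E L B" "x \<noteq> y"
    using two by blast
  then obtain x' where x': "(x', b) \<in> forces_set E L B" "x' \<noteq> a" by metis
  then obtain fs2 where fs2: "forcing_seq E L B fs2" "(x', b) \<in> set fs2"
    unfolding forces_set_def by blast
  then obtain j where j: "j < length fs2" "fs2 ! j = (x', b)" by (metis in_set_conv_nth)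
  have bC: "b \<notin> ?C" using i0(2) b_def by simp
  obtain i where i: "i \<le> j" "snd (fs2!i) \<notin> ?C" "\<forall>j<i. snd (fs2!j) \<in> ?C"
    using first[of fs2 j] j bC by auto
  have ki: "fst (fs2!i) = a" "E a (snd (fs2!i))"
    using key[OF fs2(1) _ i(2,3)] i(1) j(1) by auto
  then have "snd (fs2!i) = b" using kb(1) i(2) by blast
  have "i \<noteq> j" using ki j x' by auto
  then have ij: "i < j" using i by simp
  have "fs2 ! i \<in> set (take j fs2)" using ij j by (auto simp: in_set_conv_nth intro!: exI[of _ i])
  then have "b \<in> snd ` set (take j fs2)" using \<open>snd (fs2!i) = b\<close> by force
  moreover have "snd (fs2 ! j) \<notin> B \<union> snd ` set (take j fs2)"
    using forcing_seq_nth[OF fs2(1) j(1,2)] j(2) by simp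
  ultimately show False using j by simp
qed

lemma lb_vleak: "leak_blocks (VLeak ` L) x y \<longleftrightarrow> x \<in> L"
  unfolding leak_blocks_def by auto

theorem theorem4p2:
  fixes V :: "'a set" and E :: "'a \<Rightarrow> 'a \<Rightarrow> bool" and B :: "'a set" and l :: nat
  assumes "simple_graph V E" and "B \<subseteq> V" and "l \<ge> 1"
  shows "mixed_leaky_forcing_set V E B l \<longleftrightarrow>
           (leaky_forcing_set V E B (l - 1) \<and>
            (\<forall>L. L \<subseteq> V \<and> card L = l - 1 \<longrightarrow>
               (\<forall>v \<in> V - B. \<exists>x y. (x, v) \<in> forces_set E L B \<and> (y, v) \<in> forces_set E L B \<and> x \<noteq> y)))"
proof
  assume M: "mixed_leaky_forcing_set V E B l"
  have finV: "finite V" using assms(1) unfolding simple_graph_def by blast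
  have MV: "closure E (leak_blocks Ls) B = V"
    if "finite Ls" "card Ls \<le> l" "\<forall>lk \<in> Ls. valid_leak V E lk" for Ls
    using M that unfolding mixed_leaky_forcing_set_def by blast
  have VL: "closure E (\<lambda>x y. x \<in> L) B = V" if "L \<subseteq> V" "card L \<le> l" for L
  proof -
    have fL: "finite L" using that finV finite_subset by blast
    have "closure E (leak_blocks (VLeak ` L)) B = V"
      apply (rule MV)
      using fL that card_image_le[OF fL, of VLeak] by (auto simp: valid_leak_def)
    moreover have "leak_blocks (VLeak ` L) = (\<lambda>x y. x \<in> L)" by (intro ext) (simp add: lb_vleak)
    ultimately show ?thesis by simp
  qed
  have A: "leaky_forcing_set V E B (l - 1)"
    unfolding leaky_forcing_set_def using VL by auto
  have Bp: "\<forall>L. L \<subseteq> V \<and> card L = l - 1 \<longrightarrow>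
               (\<forall>v \<in> V - B. \<exists>x y. (x, v) \<in> forces_set E L B \<and> (y, v) \<in> forces_set E L B \<and> x \<noteq> y)"
  proof (intro allI impI ballI)
    fix L v assume L: "L \<subseteq> V \<and> card L = l - 1" and v: "v \<in> V - B"
    have fL: "finite L" using L finV finite_subset by blast
    have "v \<in> closure E (\<lambda>x y. x \<in> L) B" using VL[of L] L v by auto
    then obtain fs x where fs: "fseq E (\<lambda>x y. x \<in> L) B fs" "(x, v) \<in> set fs" "E x v"
      using closure_force_exists[OF assms(1)] v by blast
    have x: "(x, v) \<in> forces_set E L B" using fs unfolding forces_set_def forcing_seq_eq by blast
    define Ls where "Ls = insert (SLeak x v) (VLeak ` L)"
    have "card Ls \<le> Suc (card L)" unfolding Ls_def
      by (metis card_image_le card_insert_if fL finite_imageI le_SucI not_less_eq_eq)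
    then have "card Ls \<le> l" using L assms(3) by simp
    moreover have "finite Ls" unfolding Ls_def using fL by simp
    moreover have "\<forall>lk \<in> Ls. valid_leak V E lk" unfolding Ls_def using L fs(3)
      by (auto simp: valid_leak_def)
    ultimately have "closure E (leak_blocks Ls) B = V" using MV by blast
    then obtain fs2 y where fs2: "fseq E (leak_blocks Ls) B fs2" "(y, v) \<in> set fs2"
        "\<not> leak_blocks Ls y v"
      using closure_force_exists[OF assms(1)] v by blast
    have "fseq E (\<lambda>x y. x \<in> L) B fs2"
      by (rule fseq_mono[OF fs2(1)]) (auto simp: leak_blocks_def Ls_def)
    then have "(y, v) \<in> forces_set E L B" using fs2 unfolding forces_set_def forcing_seq_eq by blast
    moreover have "y \<noteq> x" using fs2(3) unfolding leak_blocks_def Ls_def by auto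
    ultimately show "\<exists>x y. (x, v) \<in> forces_set E L B \<and> (y, v) \<in> forces_set E L B \<and> x \<noteq> y"
      using x by blast
  qed
  show "leaky_forcing_set V E B (l - 1) \<and>
            (\<forall>L. L \<subseteq> V \<and> card L = l - 1 \<longrightarrow>
               (\<forall>v \<in> V - B. \<exists>x y. (x, v) \<in> forces_set E L B \<and> (y, v) \<in> forces_set E L B \<and> x \<noteq> y))"
    using A Bp by blast
next
  assume R: "leaky_forcing_set V E B (l - 1) \<and>
            (\<forall>L. L \<subseteq> V \<and> card L = l - 1 \<longrightarrow>
               (\<forall>v \<in> V - B. \<exists>x y. (x, v) \<in> forces_set E L B \<and> (y, v) \<in> forces_set E L B \<and> x \<noteq> y))"
  have finV: "finite V" using assms(1) unfolding simple_graph_def by blast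
  have VL: "closure E (\<lambda>x y. x \<in> L') B = V" if L': "L' \<subseteq> V" "card L' \<le> l" for L'
  proof (cases "card L' \<le> l - 1")
    case True
    then show ?thesis using R L' unfolding leaky_forcing_set_def by blast
  next
    case False
    then have c: "card L' = l" using L' by simp
    then have "L' \<noteq> {}" using assms(3) by auto
    then obtain a where a: "a \<in> L'" by blast
    have fL: "finite L'" using L' finV finite_subset by blast
    define L where "L = L' - {a}"
    have "card L = l - 1" unfolding L_def using c a fL by simp
    moreover have "L \<subseteq> V" unfolding L_def using L' by blast
    ultimately have two: "\<forall>v\<in>V-B. \<exists>x y. (x, v) \<in> forces_set E L B \<and> (y, v) \<in> forces_set E L B \<and> x \<noteq> y"
      using R by blast
    have "insert a L = L'" unfolding L_def using a by blast
    then show ?thesis using main_vertex[OF assms(1,2) two, of a] by simp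
  qed
  show "mixed_leaky_forcing_set V E B l"
    unfolding mixed_leaky_forcing_set_def
  proof (intro allI impI)
    fix Ls :: "'a leak set"
    assume Ls: "finite Ls \<and> card Ls \<le> l \<and> (\<forall>lk\<in>Ls. valid_leak V E lk)"
    define C where "C = closure E (leak_blocks Ls) B"
    define f where "f = (\<lambda>lk. case lk of VLeak x \<Rightarrow> x | SLeak x y \<Rightarrow> x | ELeak e \<Rightarrow> (SOME u. u \<in> e \<inter> C))"
    define L' where "L' = f ` Ls \<inter> V"
    have "card L' \<le> card (f ` Ls)" unfolding L'_def using Ls by (simp add: card_mono)
    also have "\<dots> \<le> card Ls" using Ls card_image_le by blast
    finally have cL: "card L' \<le> l" using Ls by simp
    have sub: "closure E (\<lambda>x y. x \<in> L') B \<subseteq> C"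
    proof
      fix w assume "w \<in> closure E (\<lambda>x y. x \<in> L') B"
      then show "w \<in> C"
      proof (induction rule: closure.induct)
        case (base b) then show ?case unfolding C_def by (rule closure.base)
      next
        case (force u w)
        show ?case
        proof (rule ccontr)
          assume wC: "w \<notin> C"
          have uV: "u \<in> V" using force(2) assms(1) unfolding simple_graph_def by blast
          have "leak_blocks Ls u w"
          proof (rule ccontr)
            assume "\<not> leak_blocks Ls u w"
            then have "w \<in> C" unfolding C_def
              using closure.force[of u E "leak_blocks Ls" B w] force(2,5,6) unfolding C_def by blast
            then show False using wC by simp
          qed
          then have "VLeak u \<in> Ls \<or> ELeak {u, w} \<in> Ls \<or> SLeak u w \<in> Ls"
            unfolding leak_blocks_def .
          moreover have "f (ELeak {u, w}) = u"
          proof -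
            have "{u, w} \<inter> C = {u}" using force(5) wC by auto
            then show ?thesis unfolding f_def by simp
          qed
          moreover have "f (VLeak u) = u" "f (SLeak u w) = u" unfolding f_def by simp_all
          ultimately have "u \<in> f ` Ls" by (metis image_eqI)
          then have "u \<in> L'" unfolding L'_def using uV by blast
          then show False using force(3) by simp
        qed
      qed
    qed
    have "V \<subseteq> C" using sub VL[of L'] cL unfolding L'_def by auto
    moreover have "C \<subseteq> V" unfolding C_def by (rule closure_sub[OF assms(1,2)])
    ultimately show "closure E (leak_blocks Ls) B = V" unfolding C_def by blast
  qed
qed

end
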